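(* Let $A=(a(x),dF(x))$ and $B=(b(x),dF(x))$ be games, assume $f(p)\ge h(p)$ for each $p\in[0,1]$, and let $L:=\sup_{0<p<1}g(p)+1$. Then $V(p,t,u):=\int\log\big(\frac{pa(x)+(1-p)b(x)}{u}t-t+1\big)\,dF(x)$ is continuous on $\overline{D}=\{(p,t,u):0\le p\le1,\ 0\le t\le1,\ f(p)\le u\le L\}$.
   Context: A game is a pair $(a(x),dF(x))$ with $dF$ a probability measure on $\mathbb{R}$ and $a\ge0$ measurable with finite positive integral. A real $r$ is fixed; conventions $\exp(-\infty)=0$, $1/(+\infty)=0$. For $p\in[0,1]$ put $c_p(x):=pa(x)+(1-p)b(x)$, $f(p):=\exp(\int\log c_p\,dF)/e^r$, $h(p):=1/\int\frac{1}{c_p(x)}dF(x)$. $g(p)$ denotes the value $u>0$ such that for some $t_u$ (with $0<t_u\le1$) the system $\exp\big(\int\log(\frac{c_p(x)}{u}t_u-t_u+1)\,dF(x)\big)=e^r$, $\int\frac{c_p(x)-u}{c_p(x)t_u-ut_u+u}\,dF(x)=0$ holds; such a solution is unique when it exists, and it exists for every $p$ under the hypothesis $f\ge h$. *)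

theory Defs
  imports "HOL-Probability.Probability"
begin

text \<open>A game (a(x), dF(x)): dF is a probability measure on the reals (fixed separately),
  a is nonnegative, measurable, with finite positive integral.\<close>
definition game :: "real measure \<Rightarrow> (real \<Rightarrow> real) \<Rightarrow> bool" where
  "game F a \<longleftrightarrow> a \<in> borel_measurable F \<and> (\<forall>x. 0 \<le> a x) \<and> integrable F a \<and> integral\<^sup>L F a > 0"

definition cp :: "(real \<Rightarrow> real) \<Rightarrow> (real \<Rightarrow> real) \<Rightarrow> real \<Rightarrow> real \<Rightarrow> real" where
  "cp a b p x = p * a x + (1 - p) * b x"

definition elog :: "real \<Rightarrow> ereal" where
  "elog x = (if 0 < x then ereal (ln x) else -\<infinity>)"

definition eint :: "real measure \<Rightarrow> (real \<Rightarrow> ereal) \<Rightarrow> ereal" where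
  "eint M g = enn2ereal (\<integral>\<^sup>+ x. e2ennreal (g x) \<partial>M) - enn2ereal (\<integral>\<^sup>+ x. e2ennreal (- g x) \<partial>M)"

definition fF :: "real measure \<Rightarrow> (real \<Rightarrow> real) \<Rightarrow> (real \<Rightarrow> real) \<Rightarrow> real \<Rightarrow> real \<Rightarrow> real" where
  "fF F a b r p = (case eint F (\<lambda>x. elog (cp a b p x)) of
       ereal y \<Rightarrow> exp y / exp r
     | PInfty \<Rightarrow> 0
     | MInfty \<Rightarrow> 0)"

text \<open>h(p) = 1 / \<integral> 1/c_p dF, with 1/0 = infinity and 1/infinity = 0.\<close>
definition hF :: "real measure \<Rightarrow> (real \<Rightarrow> real) \<Rightarrow> (real \<Rightarrow> real) \<Rightarrow> real \<Rightarrow> real" where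
  "hF F a b p = enn2real (inverse (\<integral>\<^sup>+ x. inverse (ennreal (cp a b p x)) \<partial>F))"

definition VF :: "real measure \<Rightarrow> (real \<Rightarrow> real) \<Rightarrow> (real \<Rightarrow> real) \<Rightarrow> real \<Rightarrow> real \<Rightarrow> real \<Rightarrow> ereal" where
  "VF F a b p t u = eint F (\<lambda>x. elog (cp a b p x / u * t - t + 1))"

definition gF :: "real measure \<Rightarrow> (real \<Rightarrow> real) \<Rightarrow> (real \<Rightarrow> real) \<Rightarrow> real \<Rightarrow> real \<Rightarrow> real" where
  "gF F a b r p = (THE u. 0 < u \<and> (\<exists>t. 0 < t \<and> t \<le> 1 \<and>
       VF F a b p t u = ereal r \<and>
       integrable F (\<lambda>x. (cp a b p x - u) / (cp a b p x * t - u * t + u)) \<and>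
       (\<integral>x. (cp a b p x - u) / (cp a b p x * t - u * t + u) \<partial>F) = 0))"

end

theory Submission
  imports Defs
begin

lemma elog_measurable[measurable (raw)]:
  "f \<in> M \<rightarrow>\<^sub>M borel \<Longrightarrow> (\<lambda>x. elog (f x)) \<in> M \<rightarrow>\<^sub>M borel"
  unfolding elog_def by (rule measurable_If) auto

lemma elog_tendsto:
  assumes "(f \<longlongrightarrow> y) F"
  shows "((\<lambda>n. elog (f n)) \<longlongrightarrow> elog y) F"
proof (cases "y > 0")
  case True
  have ev: "\<forall>\<^sub>F n in F. f n > 0" using order_tendstoD(1)[OF assms True] .
  have "((\<lambda>n. ereal (ln (f n))) \<longlongrightarrow> ereal (ln y)) F"
    by (intro tendsto_intros assms) (use True in auto)
  moreover have "\<forall>\<^sub>F n in F. ereal (ln (f n)) = elog (f n)"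
    using ev by eventually_elim (simp add: elog_def)
  ultimately have "((\<lambda>n. elog (f n)) \<longlongrightarrow> ereal (ln y)) F"
    by (rule Lim_transform_eventually)
  then show ?thesis using True by (simp add: elog_def)
next
  case False
  then have e: "elog y = -\<infinity>" by (simp add: elog_def)
  show ?thesis unfolding e tendsto_MInfty
  proof
    fix r
    have "\<forall>\<^sub>F n in F. f n < exp r" using order_tendstoD(2)[OF assms, of "exp r"] False
      by (meson exp_gt_zero not_less order_le_less_trans)
    then show "\<forall>\<^sub>F n in F. elog (f n) < ereal r"
    proof (rule eventually_mono)
      fix n assume "f n < exp r"
      then show "elog (f n) < ereal r"
        by (auto simp: elog_def) (metis ln_exp ln_less_cancel_iff exp_gt_zero)
    qed
  qed
qed

lemma e2_elog_le: "e2ennreal (elog y) \<le> ennreal (max y 0)"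
proof (cases "y > 0")
  case True
  have "ln y \<le> y" using ln_le_minus_one[OF True] by linarith
  then show ?thesis using True by (simp add: elog_def)
qed (simp add: elog_def e2ennreal_neg)

lemma e2_nelog_le:
  assumes "0 < c" "c \<le> y"
  shows "e2ennreal (- elog y) \<le> ennreal (- ln c)"
proof -
  have "ln c \<le> ln y" using assms by simp
  then show ?thesis using assms by (simp add: elog_def ennreal_leI)
qed

lemma e2_nelog_le8:
  assumes "z / 8 \<le> y"
  shows "e2ennreal (- elog y) \<le> e2ennreal (- elog z) + ennreal (ln 8)"
proof (cases "z > 0")
  case True
  then have y: "y > 0" using assms by (smt (verit) divide_pos_pos)
  have "ln (z/8) \<le> ln y" using assms True by simp
  then have "- ln y \<le> - ln z + ln 8" using True by (simp add: ln_div)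
  then have "ennreal (- ln y) \<le> ennreal (- ln z + ln 8)" by (simp add: ennreal_leI)
  also have "\<dots> \<le> ennreal (- ln z) + ennreal (ln 8)"
  proof (cases "- ln z \<ge> 0")
    case True
    then show ?thesis by (simp add: ennreal_plus[symmetric])
  next
    case False
    then have "ennreal (- ln z + ln 8) \<le> ennreal (ln 8)" by (intro ennreal_leI) simp
    then show ?thesis by (simp add: add_increasing)
  qed
  finally show ?thesis using True y by (simp add: elog_def)
qed (simp add: elog_def)

lemma nn_dom_ev:
  fixes u :: "nat \<Rightarrow> 'a \<Rightarrow> ennreal"
  assumes [measurable]: "\<And>i. u i \<in> borel_measurable M" "u' \<in> borel_measurable M" "w \<in> borel_measurable M"
    and ev: "\<forall>\<^sub>F j in sequentially. \<forall>x\<in>space M. u j x \<le> w x"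
    and w: "(\<integral>\<^sup>+x. w x \<partial>M) < \<infinity>"
    and lim: "\<forall>x\<in>space M. (\<lambda>i. u i x) \<longlonglongrightarrow> u' x"
  shows "(\<lambda>i. (\<integral>\<^sup>+x. u i x \<partial>M)) \<longlonglongrightarrow> (\<integral>\<^sup>+x. u' x \<partial>M)"
proof -
  obtain k where k: "\<And>j. j \<ge> k \<Longrightarrow> \<forall>x\<in>space M. u j x \<le> w x"
    using ev unfolding eventually_sequentially by blast
  have "(\<lambda>i. (\<integral>\<^sup>+x. u (i + k) x \<partial>M)) \<longlonglongrightarrow> (\<integral>\<^sup>+x. u' x \<partial>M)"
  proof (rule nn_integral_dominated_convergence[where w=w])
    show "AE x in M. u (j + k) x \<le> w x" for j using k[of "j+k"] by auto
    show "AE x in M. (\<lambda>i. u (i + k) x) \<longlonglongrightarrow> u' x"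
      using lim by (auto intro!: AE_I2 LIMSEQ_ignore_initial_segment)
  qed (use w in auto)
  then show ?thesis by (rule LIMSEQ_offset)
qed

lemma nn_fatou_top:
  fixes u :: "nat \<Rightarrow> 'a \<Rightarrow> ennreal"
  assumes [measurable]: "\<And>i. u i \<in> borel_measurable M"
    and lim: "\<forall>x\<in>space M. (\<lambda>i. u i x) \<longlonglongrightarrow> u' x"
    and top: "(\<integral>\<^sup>+x. u' x \<partial>M) = \<infinity>"
  shows "(\<lambda>i. (\<integral>\<^sup>+x. u i x \<partial>M)) \<longlonglongrightarrow> \<infinity>"
proof -
  have "(\<integral>\<^sup>+ x. liminf (\<lambda>n. u n x) \<partial>M) = (\<integral>\<^sup>+x. u' x \<partial>M)"
    using lim by (intro nn_integral_cong) (simp add: lim_imp_Liminf)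
  then have "liminf (\<lambda>n. integral\<^sup>N M (u n)) = top"
    using nn_integral_liminf[of u M] top by (simp add: top_unique)
  moreover then have "limsup (\<lambda>n. integral\<^sup>N M (u n)) = top"
    using Liminf_le_Limsup[of sequentially "\<lambda>n. integral\<^sup>N M (u n)"] by (simp add: top_unique)
  ultimately show ?thesis
    by (intro Liminf_eq_Limsup) auto
qed

lemma VF_seq:
  fixes F :: "real measure" and a b :: "real \<Rightarrow> real"
  assumes F: "prob_space F"
    and am[measurable]: "a \<in> borel_measurable F" and bm[measurable]: "b \<in> borel_measurable F"
    and a0: "\<And>x. 0 \<le> a x" and b0: "\<And>x. 0 \<le> b x"
    and ai: "integrable F a" and bi: "integrable F b"
    and Plim: "P \<longlonglongrightarrow> p" and Tlim: "T \<longlonglongrightarrow> t" and Ulim: "U \<longlonglongrightarrow> u"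
    and PS: "\<And>n. 0 \<le> P n \<and> P n \<le> 1" and TS: "\<And>n. 0 \<le> T n \<and> T n \<le> 1" and US: "\<And>n. 0 < U n"
    and p01: "0 \<le> p" "p \<le> 1" and t01: "0 \<le> t" "t \<le> 1" and u0: "0 < u"
  shows "(\<lambda>n. VF F a b (P n) (T n) (U n)) \<longlonglongrightarrow> VF F a b p t u"
proof -
  interpret prob_space F by (rule F)
  define ar where "ar n x = cp a b (P n) x / U n * T n - T n + 1" for n x
  define ar0 where "ar0 x = cp a b p x / u * t - t + 1" for x
  have arm[measurable]: "ar n \<in> borel_measurable F" for n
    unfolding ar_def cp_def by measurable
  have ar0m[measurable]: "ar0 \<in> borel_measurable F"
    unfolding ar0_def cp_def by measurable
  have arlim: "(\<lambda>n. ar n x) \<longlonglongrightarrow> ar0 x" for x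
    unfolding ar_def ar0_def cp_def using u0
    by (intro tendsto_intros Plim Tlim Ulim) auto
  have glim: "(\<lambda>n. elog (ar n x)) \<longlonglongrightarrow> elog (ar0 x)" for x
    by (rule elog_tendsto[OF arlim])
  have poslim: "(\<lambda>n. e2ennreal (elog (ar n x))) \<longlonglongrightarrow> e2ennreal (elog (ar0 x))" for x
    by (intro tendsto_intros glim)
  have neglim: "(\<lambda>n. e2ennreal (- elog (ar n x))) \<longlonglongrightarrow> e2ennreal (- elog (ar0 x))" for x
    by (intro tendsto_intros glim)
  have cpn0: "0 \<le> cp a b (P n) x" for n x
    unfolding cp_def using PS[of n] a0[of x] b0[of x] by simp
  have cpn_le: "cp a b (P n) x \<le> a x + b x" for n x
  proof -
    have "P n * a x \<le> a x" using PS[of n] a0[of x] by (simp add: mult_left_le_one_le)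
    moreover have "(1 - P n) * b x \<le> b x" using PS[of n] b0[of x] by (simp add: mult_left_le_one_le)
    ultimately show ?thesis unfolding cp_def by simp
  qed
  have evU1: "\<forall>\<^sub>F n in sequentially. U n > u / 2"
    using order_tendstoD(1)[OF Ulim, of "u/2"] u0 by simp
  have evU2: "\<forall>\<^sub>F n in sequentially. U n < 2 * u"
    using order_tendstoD(2)[OF Ulim, of "2*u"] u0 by simp
  define w where "w x = ennreal (2 * (a x + b x) / u + 1)" for x
  have wm[measurable]: "w \<in> borel_measurable F" unfolding w_def by measurable
  have winf: "(\<integral>\<^sup>+x. w x \<partial>F) < \<infinity>"
  proof -
    have "integrable F (\<lambda>x. 2 * (a x + b x) / u + 1)"
      using ai bi by (intro Bochner_Integration.integrable_add integrable_divide integrable_mult_right) auto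
    then have "(\<integral>\<^sup>+x. w x \<partial>F) = ennreal (\<integral>x. 2 * (a x + b x) / u + 1 \<partial>F)"
      unfolding w_def using a0 b0 u0 by (intro nn_integral_eq_integral) auto
    then show ?thesis by simp
  qed
  have posbound: "e2ennreal (elog (ar n x)) \<le> w x" if "U n > u / 2" for n x
  proof -
    have "cp a b (P n) x / U n \<le> (a x + b x) / (u / 2)"
      using cpn0[of n x] cpn_le[of n x] that u0 by (intro frac_le) auto
    also have "\<dots> = 2 * (a x + b x) / u" by simp
    finally have A: "cp a b (P n) x / U n \<le> 2 * (a x + b x) / u" .
    moreover have "cp a b (P n) x / U n * T n \<le> cp a b (P n) x / U n"
      using TS[of n] cpn0[of n x] US[of n] by (intro mult_left_le) auto
    ultimately have "ar n x \<le> 2 * (a x + b x) / u + 1"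
      unfolding ar_def using TS[of n] A by linarith
    then have "ennreal (max (ar n x) 0) \<le> w x"
      unfolding w_def using a0[of x] b0[of x] u0 by (intro ennreal_leI) auto
    then show ?thesis using e2_elog_le order_trans by blast
  qed
  have pos0bound: "e2ennreal (elog (ar0 x)) \<le> w x" for x
  proof -
    have A: "cp a b p x / u \<le> 2 * (a x + b x) / u"
    proof -
      have "0 \<le> cp a b p x" "cp a b p x \<le> a x + b x"
        unfolding cp_def using p01 a0[of x] b0[of x] mult_left_le_one_le[of "a x" p] mult_left_le_one_le[of "b x" "1-p"]
        by auto
      then have "cp a b p x / u \<le> (a x + b x) / (u / 2)" using u0 by (intro frac_le) auto
      then show ?thesis by (simp add: mult.commute)
    qed
    moreover have "0 \<le> cp a b p x" unfolding cp_def using p01 a0[of x] b0[of x] by simp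
    then have "cp a b p x / u * t \<le> cp a b p x / u"
      using t01 u0 by (intro mult_left_le) auto
    ultimately have "ar0 x \<le> 2 * (a x + b x) / u + 1"
      unfolding ar0_def using t01 A by linarith
    then have "ennreal (max (ar0 x) 0) \<le> w x"
      unfolding w_def using a0[of x] b0[of x] u0 by (intro ennreal_leI) auto
    then show ?thesis using e2_elog_le order_trans by blast
  qed
  have pos_lim: "(\<lambda>n. \<integral>\<^sup>+x. e2ennreal (elog (ar n x)) \<partial>F) \<longlonglongrightarrow> (\<integral>\<^sup>+x. e2ennreal (elog (ar0 x)) \<partial>F)"
    by (rule nn_dom_ev[where w=w]) (use evU1 posbound winf poslim in \<open>auto elim!: eventually_mono\<close>)
  have pos_fin: "(\<integral>\<^sup>+x. e2ennreal (elog (ar0 x)) \<partial>F) < \<infinity>"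
    using nn_integral_mono[of F, OF pos0bound] winf by (meson order_le_less_trans)
  have neg_lim: "(\<lambda>n. \<integral>\<^sup>+x. e2ennreal (- elog (ar n x)) \<partial>F) \<longlonglongrightarrow> (\<integral>\<^sup>+x. e2ennreal (- elog (ar0 x)) \<partial>F)"
  proof (cases "(\<integral>\<^sup>+x. e2ennreal (- elog (ar0 x)) \<partial>F) = \<infinity>")
    case True
    have "(\<lambda>n. \<integral>\<^sup>+x. e2ennreal (- elog (ar n x)) \<partial>F) \<longlonglongrightarrow> \<infinity>"
      by (rule nn_fatou_top[OF _ _ True]) (use neglim in auto)
    then show ?thesis using True by simp
  next
    case False
    then have Nfin: "(\<integral>\<^sup>+x. e2ennreal (- elog (ar0 x)) \<partial>F) < \<infinity>" by (simp add: less_top)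
    show ?thesis
    proof (cases "t < 1")
      case True
      define c where "c = (1 - t) / 2"
      have c0: "0 < c" using True by (simp add: c_def)
      have evT: "\<forall>\<^sub>F n in sequentially. T n < (1 + t) / 2"
        using order_tendstoD(2)[OF Tlim, of "(1+t)/2"] True by simp
      have bnd: "e2ennreal (- elog (ar n x)) \<le> ennreal (- ln c)" if "T n < (1 + t) / 2" for n x
      proof (rule e2_nelog_le[OF c0])
        have "0 \<le> cp a b (P n) x / U n * T n" using cpn0[of n x] US[of n] TS[of n] by simp
        moreover have "(1 - t) / 2 = 1 - (1 + t) / 2" by (simp add: field_simps)
        ultimately show "c \<le> ar n x" unfolding ar_def c_def using that by linarith
      qed
      show ?thesis
      proof (rule nn_dom_ev[where w="\<lambda>_. ennreal (- ln c)"])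
        show "\<forall>\<^sub>F j in sequentially. \<forall>x\<in>space F. e2ennreal (- elog (ar j x)) \<le> ennreal (- ln c)"
          using evT by eventually_elim (use bnd in auto)
        show "(\<integral>\<^sup>+x. ennreal (- ln c) \<partial>F) < \<infinity>" by (simp add: emeasure_space_1)
      qed (use neglim in auto)
    next
      case False
      then have t1: "t = 1" using t01 by simp
      have ar0e: "ar0 x = cp a b p x / u" for x unfolding ar0_def t1 by simp
      have evT: "\<forall>\<^sub>F n in sequentially. T n > 1 / 2"
        using order_tendstoD(1)[OF Tlim, of "1/2"] t1 by simp
      have evP1: "\<forall>\<^sub>F n in sequentially. P n \<ge> p / 2"
      proof (cases "p = 0")
        case True then show ?thesis using PS by simp
      next
        case False
        then have "\<forall>\<^sub>F n in sequentially. P n > p / 2"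
          using order_tendstoD(1)[OF Plim, of "p/2"] p01 by simp
        then show ?thesis by eventually_elim simp
      qed
      have evP2: "\<forall>\<^sub>F n in sequentially. P n \<le> (1 + p) / 2"
      proof (cases "p = 1")
        case True then show ?thesis using PS by simp
      next
        case False
        then have "\<forall>\<^sub>F n in sequentially. P n < (1 + p) / 2"
          using order_tendstoD(2)[OF Plim, of "(1+p)/2"] p01 by simp
        then show ?thesis by eventually_elim simp
      qed
      have bnd: "e2ennreal (- elog (ar n x)) \<le> e2ennreal (- elog (ar0 x)) + ennreal (ln 8)"
        if n: "T n > 1 / 2" "P n \<ge> p / 2" "P n \<le> (1 + p) / 2" "U n < 2 * u" for n x
      proof (rule e2_nelog_le8)
        let ?c = "cp a b p x" and ?cn = "cp a b (P n) x"
        have c0: "0 \<le> ?c" unfolding cp_def using p01 a0[of x] b0[of x] by simp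
        have h1: "p / 2 * a x \<le> P n * a x" using n a0[of x] by (intro mult_right_mono) auto
        have h2: "(1 - p) / 2 * b x \<le> (1 - P n) * b x" using n b0[of x] by (intro mult_right_mono) auto
        have ceq: "?c / 2 = p / 2 * a x + (1 - p) / 2 * b x" by (simp add: cp_def field_simps)
        have cn: "?c / 2 \<le> ?cn" unfolding ceq using h1 h2 unfolding cp_def by linarith
        have q1: "(?c / 2) / (2 * u) \<le> ?cn / U n"
          using cn cpn0[of n x] US[of n] n(4) by (intro frac_le) auto
        have q2: "(?c / 2) / (2 * u) * (1 / 2) \<le> ?cn / U n * T n"
          using q1 n(1) c0 u0 cpn0[of n x] US[of n] by (intro mult_mono) auto
        have q3: "(?c / 2) / (2 * u) * (1 / 2) = ?c / u / 8" by (simp add: field_simps)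
        have q4: "?cn / U n * T n \<le> ar n x" unfolding ar_def using TS[of n] by simp
        then show "ar0 x / 8 \<le> ar n x" unfolding ar0e using order_trans[OF q2 q4] q3 by metis
      qed
      show ?thesis
      proof (rule nn_dom_ev[where w="\<lambda>x. e2ennreal (- elog (ar0 x)) + ennreal (ln 8)"])
        show "\<forall>\<^sub>F j in sequentially. \<forall>x\<in>space F. e2ennreal (- elog (ar j x)) \<le> e2ennreal (- elog (ar0 x)) + ennreal (ln 8)"
          using evT evP1 evP2 evU2 by eventually_elim (use bnd in auto)
        have "(\<integral>\<^sup>+x. e2ennreal (- elog (ar0 x)) + ennreal (ln 8) \<partial>F)
            = (\<integral>\<^sup>+x. e2ennreal (- elog (ar0 x)) \<partial>F) + (\<integral>\<^sup>+x. ennreal (ln 8) \<partial>F)"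
          by (intro nn_integral_add) auto
        then show "(\<integral>\<^sup>+x. e2ennreal (- elog (ar0 x)) + ennreal (ln 8) \<partial>F) < \<infinity>"
          using Nfin by (simp add: emeasure_space_1)
      qed (use neglim in auto)
    qed
  qed
  show ?thesis
  proof -
    have eq: "VF F a b (P n) (T n) (U n) = enn2ereal (\<integral>\<^sup>+x. e2ennreal (elog (ar n x)) \<partial>F) - enn2ereal (\<integral>\<^sup>+x. e2ennreal (- elog (ar n x)) \<partial>F)" for n
      unfolding VF_def eint_def ar_def ..
    have eq0: "VF F a b p t u = enn2ereal (\<integral>\<^sup>+x. e2ennreal (elog (ar0 x)) \<partial>F) - enn2ereal (\<integral>\<^sup>+x. e2ennreal (- elog (ar0 x)) \<partial>F)"
      unfolding VF_def eint_def ar0_def ..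
    show ?thesis unfolding eq eq0
      by (intro tendsto_diff_ereal_general tendsto_enn2erealI pos_lim neg_lim)
         (use pos_fin in \<open>auto simp: less_top[symmetric]\<close>)
  qed
qed

theorem lemmaD15:
  fixes F :: "real measure" and a b :: "real \<Rightarrow> real" and r :: real
  assumes "prob_space F" and "sets F = sets borel"
    and "game F a" and "game F b"
    and "\<forall>p\<in>{0..1}. fF F a b r p \<ge> hF F a b p"
  shows "continuous_on
     {(p, t, u). 0 \<le> p \<and> p \<le> 1 \<and> 0 \<le> t \<and> t \<le> 1 \<and> 0 < u \<and>
        fF F a b r p \<le> u \<and> u \<le> (SUP q\<in>{0<..<1}. gF F a b r q) + 1}
     (\<lambda>(p, t, u). VF F a b p t u)"
proof (rule continuous_on_subset)
  let ?S = "{(p, t, u). 0 \<le> p \<and> p \<le> 1 \<and> 0 \<le> t \<and> t \<le> 1 \<and> (0::real) < u}"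
  show "{(p, t, u). 0 \<le> p \<and> p \<le> 1 \<and> 0 \<le> t \<and> t \<le> 1 \<and> 0 < u \<and>
        fF F a b r p \<le> u \<and> u \<le> (SUP q\<in>{0<..<1}. gF F a b r q) + 1} \<subseteq> ?S" by auto
  have am: "a \<in> borel_measurable F" "\<And>x. 0 \<le> a x" "integrable F a"
    using assms(3) by (auto simp: game_def)
  have bm: "b \<in> borel_measurable F" "\<And>x. 0 \<le> b x" "integrable F b"
    using assms(4) by (auto simp: game_def)
  show "continuous_on ?S (\<lambda>(p, t, u). VF F a b p t u)"
  proof (rule continuous_on_sequentiallyI)
    fix X :: "nat \<Rightarrow> real \<times> real \<times> real" and z
    assume XS: "\<forall>n. X n \<in> ?S" and zS: "z \<in> ?S" and lim: "X \<longlonglongrightarrow> z"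
    obtain p t u where z: "z = (p, t, u)" by (cases z) auto
    define P where "P n = fst (X n)" for n
    define T where "T n = fst (snd (X n))" for n
    define U where "U n = snd (snd (X n))" for n
    have XX: "X n = (P n, T n, U n)" for n by (simp add: P_def T_def U_def)
    have "P \<longlonglongrightarrow> p" unfolding P_def using tendsto_fst[OF lim] z by simp
    moreover have "T \<longlonglongrightarrow> t" unfolding T_def using tendsto_fst[OF tendsto_snd[OF lim]] z by simp
    moreover have "U \<longlonglongrightarrow> u" unfolding U_def using tendsto_snd[OF tendsto_snd[OF lim]] z by simp
    ultimately have "(\<lambda>n. VF F a b (P n) (T n) (U n)) \<longlonglongrightarrow> VF F a b p t u"
      using XS zS z
      by (intro VF_seq[OF assms(1) am(1) bm(1) am(2) bm(2) am(3) bm(3)]) (auto simp: XX)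
    then show "(\<lambda>n. (\<lambda>(p, t, u). VF F a b p t u) (X n)) \<longlonglongrightarrow> (\<lambda>(p, t, u). VF F a b p t u) z"
      by (simp add: XX z)
  qed
qed

end
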